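(* Let $k\ge1$ be an integer. Every uniformizable $k$-primal topological space is a functional Alexandroff space.
   Context: For a topological space $X$ and $a\in X$, $V(a):=\bigcap\{U: U\text{ open}, a\in U\}$. For $f:X\to X$ and $a\in X$, $V_f(a):=\bigcup_{n\ge0}f^{-n}(a)=\{x:\exists n\ge0,\ f^n(x)=a\}$. A topological space $X$ is $k$-primal if there exist maps $f_1,\dots,f_k:X\to X$ such that for each $a\in X$ the set $V_{f_1}(a)\cap\cdots\cap V_{f_k}(a)$ is open and is the smallest open neighbourhood of $a$ (i.e. equals $V(a)$ and is open). $X$ is a functional Alexandroff space if there is $f:X\to X$ such that the topology with basis $\{V_f(a):a\in X\}$ equals the topology of $X$ (equivalently, $X$ is $1$-primal). $X$ is uniformizable if its topology is induced by some uniform structure on $X$. *)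

theory Defs
  imports "HOL-Analysis.Analysis"
begin

definition Vnbhd :: "'a topology \<Rightarrow> 'a \<Rightarrow> 'a set" where
  "Vnbhd T a = \<Inter>{U. openin T U \<and> a \<in> U}"

definition Vfun :: "'a set \<Rightarrow> ('a \<Rightarrow> 'a) \<Rightarrow> 'a \<Rightarrow> 'a set" where
  "Vfun X f a = {x \<in> X. \<exists>n. (f ^^ n) x = a}"

definition k_primal :: "nat \<Rightarrow> 'a topology \<Rightarrow> bool" where
  "k_primal k T \<longleftrightarrow>
     (\<exists>f :: nat \<Rightarrow> 'a \<Rightarrow> 'a.
        (\<forall>i<k. f i ` topspace T \<subseteq> topspace T) \<and>
        (\<forall>a \<in> topspace T.
           openin T (topspace T \<inter> (\<Inter>i\<in>{..<k}. Vfun (topspace T) (f i) a)) \<and>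
           topspace T \<inter> (\<Inter>i\<in>{..<k}. Vfun (topspace T) (f i) a) = Vnbhd T a))"

definition functional_alexandroff :: "'a topology \<Rightarrow> bool" where
  "functional_alexandroff T \<longleftrightarrow>
     (\<exists>f. f ` topspace T \<subseteq> topspace T \<and>
        (\<forall>U. openin T U \<longleftrightarrow>
              (\<exists>B. B \<subseteq> (Vfun (topspace T) f) ` topspace T \<and> U = \<Union>B)))"

definition uniformity_on :: "'a set \<Rightarrow> ('a \<times> 'a) set set \<Rightarrow> bool" where
  "uniformity_on X \<U> \<longleftrightarrow>
     \<U> \<noteq> {} \<and>
     (\<forall>E\<in>\<U>. E \<subseteq> X \<times> X \<and> Id_on X \<subseteq> E) \<and>
     (\<forall>E\<in>\<U>. \<forall>F. E \<subseteq> F \<and> F \<subseteq> X \<times> X \<longrightarrow> F \<in> \<U>) \<and>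
     (\<forall>E\<in>\<U>. \<forall>F\<in>\<U>. E \<inter> F \<in> \<U>) \<and>
     (\<forall>E\<in>\<U>. E\<inverse> \<in> \<U>) \<and>
     (\<forall>E\<in>\<U>. \<exists>F\<in>\<U>. F O F \<subseteq> E)"

definition uniformizable :: "'a topology \<Rightarrow> bool" where
  "uniformizable T \<longleftrightarrow>
     (\<exists>\<U>. uniformity_on (topspace T) \<U> \<and>
        (\<forall>U. openin T U \<longleftrightarrow>
              U \<subseteq> topspace T \<and> (\<forall>x\<in>U. \<exists>E\<in>\<U>. E `` {x} \<subseteq> U)))"

end

theory Submission
  imports Defs
begin

lemma unif_parts:
  assumes "uniformity_on X UU"
  shows "(\<forall>E\<in>UU. E \<subseteq> X \<times> X \<and> Id_on X \<subseteq> E) \<and> (\<forall>E\<in>UU. E\<inverse> \<in> UU) \<and> (\<forall>E\<in>UU. \<exists>F\<in>UU. F O F \<subseteq> E)"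
  using assms unfolding uniformity_on_def
  apply (elim conjE)
  apply (intro conjI)
    apply assumption+
  done
lemma unif_sub: "uniformity_on X UU \<Longrightarrow> E \<in> UU \<Longrightarrow> E \<subseteq> X \<times> X"
  using unif_parts by blast
lemma unif_id: "uniformity_on X UU \<Longrightarrow> E \<in> UU \<Longrightarrow> Id_on X \<subseteq> E"
  using unif_parts by blast
lemma unif_conv: "uniformity_on X UU \<Longrightarrow> E \<in> UU \<Longrightarrow> E\<inverse> \<in> UU"
  using unif_parts by blast
lemma unif_half: "uniformity_on X UU \<Longrightarrow> E \<in> UU \<Longrightarrow> \<exists>F\<in>UU. F O F \<subseteq> E"
  using unif_parts by blast

lemma unif_nbhd:
  assumes U: "uniformity_on X UU"
    and op: "\<forall>U. openin T U \<longleftrightarrow> U \<subseteq> X \<and> (\<forall>x\<in>U. \<exists>E\<in>UU. E `` {x} \<subseteq> U)"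
    and G: "G \<in> UU" and a: "a \<in> X"
  shows "\<exists>W. openin T W \<and> a \<in> W \<and> W \<subseteq> G `` {a}"
proof -
  define W where "W = {y \<in> X. \<exists>H\<in>UU. H `` {y} \<subseteq> G `` {a}}"
  have "W \<subseteq> X \<and> (\<forall>y\<in>W. \<exists>E\<in>UU. E `` {y} \<subseteq> W)"
  proof (intro conjI ballI)
    show "W \<subseteq> X" unfolding W_def by blast
    fix y assume "y \<in> W"
    then obtain H where H: "H \<in> UU" "H `` {y} \<subseteq> G `` {a}" unfolding W_def by blast
    obtain H2 where H2: "H2 \<in> UU" "H2 O H2 \<subseteq> H" using unif_half[OF U H(1)] by blast
    have H2X: "H2 \<subseteq> X \<times> X" using unif_sub[OF U H2(1)] .
    have "H2 `` {y} \<subseteq> W"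
    proof
      fix z assume z: "z \<in> H2 `` {y}"
      hence "z \<in> X" using H2X by blast
      moreover have "H2 `` {z} \<subseteq> G `` {a}"
        using z H2(2) H(2) by blast
      ultimately show "z \<in> W" unfolding W_def using H2(1) by blast
    qed
    thus "\<exists>E\<in>UU. E `` {y} \<subseteq> W" using H2(1) by blast
  qed
  hence "openin T W" using op[rule_format, of W] by simp
  moreover have "a \<in> W" unfolding W_def using a G by blast
  moreover have "W \<subseteq> G `` {a}"
  proof
    fix y assume "y \<in> W"
    then obtain H where H: "H \<in> UU" "H `` {y} \<subseteq> G `` {a}" "y \<in> X" unfolding W_def by blast
    have "(y,y) \<in> H" using unif_id[OF U H(1)] H(3) by (auto simp: Id_on_def)
    thus "y \<in> G `` {a}" using H(2) by blast
  qed
  ultimately show ?thesis by blast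
qed

theorem mainTheorem7:
  fixes T :: "'a topology" and k :: nat
  assumes "k \<ge> 1" and "uniformizable T" and "k_primal k T"
  shows "functional_alexandroff T"
proof -
  define X where "X = topspace T"
  define V where "V = Vnbhd T"
  obtain UU where UU: "uniformity_on X UU"
    and op: "\<forall>U. openin T U \<longleftrightarrow> U \<subseteq> X \<and> (\<forall>x\<in>U. \<exists>E\<in>UU. E `` {x} \<subseteq> U)"
    using assms(2) unfolding uniformizable_def X_def by blast
  obtain f :: "nat \<Rightarrow> 'a \<Rightarrow> 'a" where fX: "\<forall>i<k. f i ` X \<subseteq> X"
    and fV: "\<forall>a \<in> X. openin T (X \<inter> (\<Inter>i\<in>{..<k}. Vfun X (f i) a)) \<and>
           X \<inter> (\<Inter>i\<in>{..<k}. Vfun X (f i) a) = V a"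
    using assms(3) unfolding k_primal_def X_def V_def by blast
  define f0 where "f0 = f 0"
  have k0: "0 < k" using assms(1) by simp
  have A: "openin T (V a)" if "a \<in> X" for a
  proof -
    have "openin T (X \<inter> (\<Inter>i\<in>{..<k}. Vfun X (f i) a))" "X \<inter> (\<Inter>i\<in>{..<k}. Vfun X (f i) a) = V a"
      using fV that by auto
    thus ?thesis by simp
  qed
  have Ain: "a \<in> V a" for a unfolding V_def Vnbhd_def by blast
  have B: "V a \<subseteq> X" if "a \<in> X" for a
  proof -
    have "X \<in> {U. openin T U \<and> a \<in> U}" using that unfolding X_def by simp
    hence "\<Inter>{U. openin T U \<and> a \<in> U} \<subseteq> X" by (rule Inter_lower)
    thus ?thesis unfolding V_def Vnbhd_def .
  qed
  have C: "x \<in> U" if "x \<in> V a" "openin T U" "a \<in> U" for x a U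
    using that unfolding V_def Vnbhd_def by blast
  have D: "V x \<subseteq> V a" if "x \<in> V a" "a \<in> X" for x a
    using that A[of a] unfolding V_def Vnbhd_def by blast
  have E: "a \<in> V x" if E1: "x \<in> V a" and E2: "a \<in> X" for x a
  proof -
    have xX: "x \<in> X" using that B by blast
    obtain G where G: "G \<in> UU" "G `` {x} \<subseteq> V x" using op A[OF xX] Ain[of x] by blast
    have "G\<inverse> \<in> UU" using unif_conv[OF UU G(1)] .
    then obtain W where "openin T W" "a \<in> W" "W \<subseteq> G\<inverse> `` {a}"
      using unif_nbhd[OF UU op _ E2] by blast
    hence "x \<in> G\<inverse> `` {a}" using C[OF E1] by blast
    thus ?thesis using G(2) by blast
  qed
  have F: "\<exists>n. (f0 ^^ n) x = a" if "x \<in> V a" "a \<in> X" for x a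
  proof -
    have "x \<in> Vfun X (f 0) a" using fV that k0 by blast
    thus ?thesis unfolding Vfun_def f0_def by blast
  qed
  have f0X: "f0 x \<in> X" if "x \<in> X" for x using fX k0 that unfolding f0_def by blast
  have Veq: "V y = V x" if "y \<in> V x" "x \<in> X" for x y
    proof -
    have yX: "y \<in> X" using B that by blast
    show ?thesis using D[OF that] D[OF E[OF that] yX] by (rule subset_antisym)
  qed
  define g where "g x = (if \<exists>m>0. (f0^^m) x \<in> V x
      then (f0 ^^ (LEAST m. 0 < m \<and> (f0^^m) x \<in> V x)) x else x)" for x
  have gV: "g x \<in> V x" for x
  proof (cases "\<exists>m>0. (f0^^m) x \<in> V x")
    case True
    then obtain m where "0 < m \<and> (f0^^m) x \<in> V x" by blast
    hence "0 < (LEAST m. 0 < m \<and> (f0^^m) x \<in> V x) \<and>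
       (f0^^(LEAST m. 0 < m \<and> (f0^^m) x \<in> V x)) x \<in> V x"
      by (rule LeastI)
    thus ?thesis unfolding g_def using True by simp
  next
    case False thus ?thesis unfolding g_def using Ain[of x] by (simp only: if_False)
  qed
  have gX: "g x \<in> X" if "x \<in> X" for x using gV B that by blast
  have H: "\<forall>x a. x \<in> X \<longrightarrow> (f0^^j) x = a \<longrightarrow> a \<in> V x \<longrightarrow> (\<exists>n. (g^^n) x = a)" for j
  proof (induction j rule: less_induct)
    case (less j)
    show ?case
    proof (intro allI impI)
      fix x a assume xX: "x \<in> X" and ja: "(f0^^j) x = a" and aV: "a \<in> V x"
      show "\<exists>n. (g^^n) x = a"
      proof (cases "j = 0")
        case True thus ?thesis using ja by (intro exI[of _ 0]) simp
      next
        case False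
        hence ex: "0 < j \<and> (f0^^j) x \<in> V x" using ja aV by simp
        define m where "m = (LEAST m. 0 < m \<and> (f0^^m) x \<in> V x)"
        have mj: "m \<le> j" unfolding m_def using ex by (rule Least_le)
        have m0: "0 < m" unfolding m_def using ex by (metis (mono_tags, lifting) LeastI)
        have exm: "\<exists>m>0. (f0^^m) x \<in> V x" using ex by blast
        have gx: "g x = (f0^^m) x" unfolding g_def m_def by (rule if_P[OF exm])
        have yV: "g x \<in> V x" by (rule gV)
        have yX: "g x \<in> X" using gX xX .
        have "(f0^^(j-m)) ((f0^^m) x) = (f0^^((j-m)+m)) x" by (simp add: funpow_add)
        also have "(j-m)+m = j" using mj by simp
        finally have e1: "(f0^^(j-m)) (g x) = a" using ja gx by simp
        have e2: "a \<in> V (g x)" using Veq[OF yV xX] aV by simp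
        have jm: "j-m < j" using m0 mj ex by simp
        obtain n where "(g^^n) (g x) = a"
          using less.IH[OF jm, rule_format, OF yX e1 e2] by blast
        hence "(g^^(Suc n)) x = a" by (simp only: funpow_Suc_right o_apply)
        thus ?thesis by blast
      qed
    qed
  qed
  have gn: "(g^^n) x \<in> V x" if "x \<in> X" for n x
  proof (induction n)
    case 0 thus ?case using Ain by simp
  next
    case (Suc n)
    have "g ((g^^n) x) \<in> V ((g^^n) x)" by (rule gV)
    also have "V ((g^^n) x) \<subseteq> V x" by (rule D[OF Suc that])
    finally show ?case by simp
  qed
  have I: "Vfun X g a = V a" if aX: "a \<in> X" for a
  proof
    show "Vfun X g a \<subseteq> V a"
    proof
      fix x assume "x \<in> Vfun X g a"
      then obtain n where xX: "x \<in> X" and "(g^^n) x = a" unfolding Vfun_def by blast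
      hence "a \<in> V x" using gn by blast
      thus "x \<in> V a" using E xX by blast
    qed
  next
    show "V a \<subseteq> Vfun X g a"
    proof
      fix x assume xa: "x \<in> V a"
      have xX: "x \<in> X" using xa B aX by blast
      have ax: "a \<in> V x" using E xa aX by blast
      obtain j where "(f0^^j) x = a" using F xa aX by blast
      then obtain n where "(g^^n) x = a" using H xX ax by blast
      thus "x \<in> Vfun X g a" unfolding Vfun_def using xX by blast
    qed
  qed
  show ?thesis
    unfolding functional_alexandroff_def
  proof (intro exI[of _ g] conjI allI)
    show "g ` topspace T \<subseteq> topspace T" using gX unfolding X_def by blast
    fix U
    show "openin T U = (\<exists>B\<subseteq>Vfun (topspace T) g ` topspace T. U = \<Union> B)"
    proof
      assume oU: "openin T U"
      have UX: "U \<subseteq> X" using oU openin_subset X_def by blast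
      have "U = \<Union> (V ` U)"
      proof
        show "U \<subseteq> \<Union> (V ` U)" using Ain by blast
        show "\<Union> (V ` U) \<subseteq> U" using C[OF _ oU] by blast
      qed
      moreover have "V ` U \<subseteq> Vfun X g ` X"
      proof
        fix S assume "S \<in> V ` U"
        then obtain a where a: "a \<in> U" "S = V a" by blast
        have aX: "a \<in> X" using a(1) UX by blast
        have "S = Vfun X g a" using a(2) I[OF aX] by simp
        thus "S \<in> Vfun X g ` X" using aX by blast
      qed
      ultimately show "\<exists>B\<subseteq>Vfun (topspace T) g ` topspace T. U = \<Union> B"
        unfolding X_def by blast
    next
      assume "\<exists>B\<subseteq>Vfun (topspace T) g ` topspace T. U = \<Union> B"
      then obtain B where B: "B \<subseteq> Vfun X g ` X" "U = \<Union> B" unfolding X_def by blast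
      have "\<forall>S\<in>B. openin T S"
      proof
        fix S assume "S \<in> B"
        then obtain a where a: "a \<in> X" "S = Vfun X g a" using B(1) by blast
        show "openin T S" using a I[OF a(1)] A[OF a(1)] by simp
      qed
      thus "openin T U" unfolding B(2) by (intro openin_Union) blast
    qed
  qed
qed

end
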